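(* Let $I\subset\mathbb{R}$ be an interval and let $M,N\colon I^2\to I$ be means. Then the mean-type mapping $(M,N)$ is weakly contractive if and only if the mean-type mapping $(M_2,N_2)$ is diagonally contractive, i.e. $|M_2(x,y)-N_2(x,y)|<|x-y|$ for all $x,y\in I$ with $x\neq y$.
   Context: A function $M\colon I^2\to\mathbb{R}$ is a mean in $I$ if $\min(x,y)\le M(x,y)\le\max(x,y)$ for all $x,y\in I$. For means $M,N\colon I^2\to I$, the mean-type mapping $(M,N)\colon I^2\to I^2$ is $(x,y)\mapsto(M(x,y),N(x,y))$, and for $n\in\mathbb{N}$ the functions $M_n,N_n\colon I^2\to I$ are defined by $(M_n,N_n):=(M,N)^n$ (the $n$-th iterate under composition). The mapping $(M,N)$ is weakly contractive if for all $x,y\in I$ with $x\ne y$ there exists a positive integer $n=n(x,y)$ such that $|M_n(x,y)-N_n(x,y)|<|x-y|$. *)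

theory Defs
  imports "HOL-Analysis.Analysis"
begin

definition is_mean :: "real set \<Rightarrow> (real \<Rightarrow> real \<Rightarrow> real) \<Rightarrow> bool" where
  "is_mean I M \<longleftrightarrow> (\<forall>x\<in>I. \<forall>y\<in>I. min x y \<le> M x y \<and> M x y \<le> max x y)"

definition mean_type_map :: "(real \<Rightarrow> real \<Rightarrow> real) \<Rightarrow> (real \<Rightarrow> real \<Rightarrow> real) \<Rightarrow> real \<times> real \<Rightarrow> real \<times> real" where
  "mean_type_map M N = (\<lambda>(x, y). (M x y, N x y))"

definition iterM :: "(real \<Rightarrow> real \<Rightarrow> real) \<Rightarrow> (real \<Rightarrow> real \<Rightarrow> real) \<Rightarrow> nat \<Rightarrow> real \<Rightarrow> real \<Rightarrow> real" where
  "iterM M N n x y = fst ((mean_type_map M N ^^ n) (x, y))"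

definition iterN :: "(real \<Rightarrow> real \<Rightarrow> real) \<Rightarrow> (real \<Rightarrow> real \<Rightarrow> real) \<Rightarrow> nat \<Rightarrow> real \<Rightarrow> real \<Rightarrow> real" where
  "iterN M N n x y = snd ((mean_type_map M N ^^ n) (x, y))"

definition weakly_contractive :: "real set \<Rightarrow> (real \<Rightarrow> real \<Rightarrow> real) \<Rightarrow> (real \<Rightarrow> real \<Rightarrow> real) \<Rightarrow> bool" where
  "weakly_contractive I M N \<longleftrightarrow>
     (\<forall>x\<in>I. \<forall>y\<in>I. x \<noteq> y \<longrightarrow> (\<exists>n>0. \<bar>iterM M N n x y - iterN M N n x y\<bar> < \<bar>x - y\<bar>))"

definition diagonally_contractive :: "real set \<Rightarrow> (real \<Rightarrow> real \<Rightarrow> real) \<Rightarrow> (real \<Rightarrow> real \<Rightarrow> real) \<Rightarrow> bool" where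
  "diagonally_contractive I M N \<longleftrightarrow>
     (\<forall>x\<in>I. \<forall>y\<in>I. x \<noteq> y \<longrightarrow> \<bar>M x y - N x y\<bar> < \<bar>x - y\<bar>)"

end

theory Submission
  imports Defs
begin

lemma orbit_in:
  assumes "a \<in> T" "\<And>q. q \<in> T \<Longrightarrow> F q \<in> T"
  shows "(F ^^ n) a \<in> T"
  by (induction n) (use assms in auto)

lemma two_pts:
  fixes x y u v :: real
  assumes "min x y \<le> u" "u \<le> max x y" "min x y \<le> v" "v \<le> max x y" "\<bar>x - y\<bar> \<le> \<bar>u - v\<bar>"
  shows "(u, v) = (x, y) \<or> (u, v) = (y, x)"
  using assms by (auto simp: min_def max_def abs_if split: if_splits)

theorem mainTheorem2:
  fixes I :: "real set" and M N :: "real \<Rightarrow> real \<Rightarrow> real"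
  assumes "is_interval I"
    and "\<forall>x\<in>I. \<forall>y\<in>I. M x y \<in> I \<and> N x y \<in> I"
    and "is_mean I M" and "is_mean I N"
  shows "weakly_contractive I M N \<longleftrightarrow> diagonally_contractive I (iterM M N 2) (iterN M N 2)"
proof -
  define F where "F = mean_type_map M N"
  define D where "D = (\<lambda>p::real\<times>real. \<bar>fst p - snd p\<bar>)"
  have Fp: "F (a, b) = (M a b, N a b)" for a b unfolding F_def mean_type_map_def by simp
  have mM: "min a b \<le> M a b \<and> M a b \<le> max a b" if "a \<in> I" "b \<in> I" for a b
    using assms(3) that unfolding is_mean_def by blast
  have mN: "min a b \<le> N a b \<and> N a b \<le> max a b" if "a \<in> I" "b \<in> I" for a b
    using assms(4) that unfolding is_mean_def by blast
  have FI: "F p \<in> I \<times> I" if "p \<in> I \<times> I" for p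
    using that assms(2) by (cases p) (auto simp: Fp)
  have FD: "D (F p) \<le> D p" if "p \<in> I \<times> I" for p
  proof (cases p)
    case (Pair a b)
    then have "a \<in> I" "b \<in> I" using that by auto
    from mM[OF this] mN[OF this] show ?thesis
      by (auto simp: Pair Fp D_def min_def max_def abs_if split: if_splits)
  qed
  have itI: "(F ^^ n) p \<in> I \<times> I" if "p \<in> I \<times> I" for p n
    using orbit_in[of p "I \<times> I" F n] that FI by blast
  have itD: "D ((F ^^ n) p) \<le> D p" if "p \<in> I \<times> I" for p n
  proof (induction n)
    case 0 then show ?case by simp
  next
    case (Suc n)
    have "D ((F ^^ Suc n) p) = D (F ((F ^^ n) p))" by simp
    also have "\<dots> \<le> D ((F ^^ n) p)" by (rule FD[OF itI[OF that]])
    finally show ?case using Suc by simp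
  qed
  have iM: "iterM M N n x y = fst ((F ^^ n) (x, y))" for n x y
    unfolding iterM_def F_def by simp
  have iN: "iterN M N n x y = snd ((F ^^ n) (x, y))" for n x y
    unfolding iterN_def F_def by simp
  have F2: "(F ^^ 2) p = F (F p)" for p by (simp add: numeral_2_eq_2)
  show ?thesis
  proof
    assume wc: "weakly_contractive I M N"
    show "diagonally_contractive I (iterM M N 2) (iterN M N 2)"
      unfolding diagonally_contractive_def
    proof (intro ballI impI)
      fix x y assume xy: "x \<in> I" "y \<in> I" "x \<noteq> y"
      define p where "p = (x, y)"
      have pI: "p \<in> I \<times> I" using xy p_def by auto
      show "\<bar>iterM M N 2 x y - iterN M N 2 x y\<bar> < \<bar>x - y\<bar>"
      proof (rule ccontr)
        assume "\<not> ?thesis"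
        then have c: "D (F (F p)) \<ge> D p" unfolding iM iN F2 D_def p_def by simp
        have d1: "D (F p) \<le> D p" by (rule FD[OF pI])
        have d2: "D (F (F p)) \<le> D (F p)" by (rule FD[OF FI[OF pI]])
        let ?S = "{(x, y), (y, x)}"
        have S1: "F p \<in> ?S"
          using two_pts[of x y "M x y" "N x y"] mM[OF xy(1,2)] mN[OF xy(1,2)] c d1 d2
          by (auto simp: p_def Fp D_def)
        have S2: "F (F p) \<in> ?S"
        proof -
          obtain u v where uv: "F p = (u, v)" by (cases "F p")
          have uvI: "u \<in> I" "v \<in> I" using S1 xy uv by auto
          have "min x y = min u v" "max x y = max u v" using S1 uv by (auto simp: min_def max_def)
          then show ?thesis
            using two_pts[of x y "M u v" "N u v"] mM[OF uvI] mN[OF uvI] c d1 d2 uv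
            by (auto simp: p_def Fp D_def)
        qed
        define T where "T = {p, F p}"
        have TS: "T \<subseteq> ?S" using S1 p_def T_def by auto
        have Tc: "F q \<in> T" if "q \<in> T" for q
        proof -
          consider "F p = p" | "F p = (y, x)" using S1 p_def by auto
          then show ?thesis
          proof cases
            case 1 then show ?thesis using that T_def by auto
          next
            case 2
            then have "F (F p) = p \<or> F (F p) = F p" using S2 p_def by auto
            then show ?thesis using that T_def by auto
          qed
        qed
        obtain n where n: "n > 0" "\<bar>iterM M N n x y - iterN M N n x y\<bar> < \<bar>x - y\<bar>"
          using wc xy unfolding weakly_contractive_def by blast
        have "(F ^^ n) p \<in> ?S" using orbit_in[of p T F n] Tc TS T_def by auto
        then have "\<bar>iterM M N n x y - iterN M N n x y\<bar> = \<bar>x - y\<bar>"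
          unfolding iM iN p_def by auto
        with n show False by simp
      qed
    qed
  next
    assume dc: "diagonally_contractive I (iterM M N 2) (iterN M N 2)"
    show "weakly_contractive I M N"
      unfolding weakly_contractive_def
    proof (intro ballI impI)
      fix x y assume "x \<in> I" "y \<in> I" "x \<noteq> y"
      then show "\<exists>n>0. \<bar>iterM M N n x y - iterN M N n x y\<bar> < \<bar>x - y\<bar>"
        using dc unfolding diagonally_contractive_def by (intro exI[of _ 2]) auto
    qed
  qed
qed

end
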